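(* (a) Let $(A,\widetilde{A})$ be a dual pair of closed operators on a Hilbert space satisfying the common core property with a common core $\mathcal{D}$, where $A$ is dissipative. Then there exist two symmetric operators $S$ and $V\ge0$ with $\mathcal{D}(S)=\mathcal{D}(V)=\mathcal{D}$ such that $A\upharpoonright_{\mathcal{D}}=S+iV$ and $\widetilde{A}\upharpoonright_{\mathcal{D}}=S-iV$. (b) Conversely, let $A$ be a dissipative operator of the form $A=S+iV$, where $S$ and $V\ge0$ are symmetric operators with $\mathcal{D}(A)=\mathcal{D}(S)=\mathcal{D}(V)=:\mathcal{D}$. Define $\widetilde{A}:=S-iV$ with $\mathcal{D}(\widetilde{A})=\mathcal{D}$. Then the closures $(\overline{A},\overline{\widetilde{A}})$ form a dual pair that has the common core property.
   Context: The inner product is antilinear in the first argument. A densely defined operator $B$ is dissipative if $\mathrm{Im}\langle\psi,B\psi\rangle\ge0$ for all $\psi\in\mathcal{D}(B)$. A pair $(A,\widetilde{A})$ of densely defined closable operators is a dual pair if $A\subset\widetilde{A}^*$ (equivalently $\widetilde{A}\subset A^*$). A dual pair of closed operators has the common core property if there is a subspace $\mathcal{D}\subset\mathcal{D}(A)\cap\mathcal{D}(\widetilde{A})$ with $\overline{A\upharpoonright_{\mathcal{D}}}=A$ and $\overline{\widetilde{A}\upharpoonright_{\mathcal{D}}}=\widetilde{A}$. *)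

theory Defs
  imports "HOL-Analysis.Analysis"
begin

class complex_vector = real_vector +
  fixes scaleC :: "complex \<Rightarrow> 'a \<Rightarrow> 'a" (infixr "*\<^sub>C" 75)
  assumes scaleC_add_right: "a *\<^sub>C (x + y) = a *\<^sub>C x + a *\<^sub>C y"
    and scaleC_add_left: "(a + b) *\<^sub>C x = a *\<^sub>C x + b *\<^sub>C x"
    and scaleC_scaleC: "a *\<^sub>C (b *\<^sub>C x) = (a * b) *\<^sub>C x"
    and scaleC_one: "1 *\<^sub>C x = x"
    and scaleC_of_real: "complex_of_real r *\<^sub>C x = r *\<^sub>R x"

class complex_inner = complex_vector + real_normed_vector +
  fixes cinner :: "'a \<Rightarrow> 'a \<Rightarrow> complex"
  assumes cinner_commute: "cinner x y = cnj (cinner y x)"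
    and cinner_add_left: "cinner (x + y) z = cinner x z + cinner y z"
    and cinner_scaleC_left: "cinner (a *\<^sub>C x) y = cnj a * cinner x y"
    and cinner_real: "Im (cinner x x) = 0"
    and cinner_nonneg: "0 \<le> Re (cinner x x)"
    and cinner_eq_zero_iff: "cinner x x = 0 \<longleftrightarrow> x = 0"
    and norm_eq_sqrt_cinner: "norm x = sqrt (Re (cinner x x))"

class chilbert_space = complex_inner + complete_space

text \<open>An operator on H is a linear subspace of H \<times> H that is the graph of a function.\<close>
definition csubspace :: "'a::complex_vector set \<Rightarrow> bool" where
  "csubspace D \<longleftrightarrow> 0 \<in> D \<and> (\<forall>x\<in>D. \<forall>y\<in>D. x + y \<in> D) \<and> (\<forall>c. \<forall>x\<in>D. c *\<^sub>C x \<in> D)"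

definition is_operator :: "('a::complex_vector \<times> 'a) set \<Rightarrow> bool" where
  "is_operator G \<longleftrightarrow> (0, 0) \<in> G
     \<and> (\<forall>x y u v. (x, y) \<in> G \<longrightarrow> (u, v) \<in> G \<longrightarrow> (x + u, y + v) \<in> G)
     \<and> (\<forall>c x y. (x, y) \<in> G \<longrightarrow> (c *\<^sub>C x, c *\<^sub>C y) \<in> G)
     \<and> (\<forall>y. (0, y) \<in> G \<longrightarrow> y = 0)"

definition op_dom :: "('a \<times> 'a) set \<Rightarrow> 'a set" where
  "op_dom G = fst ` G"

definition op_apply :: "('a \<times> 'a) set \<Rightarrow> 'a \<Rightarrow> 'a" where
  "op_apply G x = (THE y. (x, y) \<in> G)"

definition densely_defined :: "('a::complex_inner \<times> 'a) set \<Rightarrow> bool" where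
  "densely_defined G \<longleftrightarrow> is_operator G \<and> closure (op_dom G) = UNIV"

definition closable :: "('a::complex_inner \<times> 'a) set \<Rightarrow> bool" where
  "closable G \<longleftrightarrow> is_operator G \<and> is_operator (closure G)"

definition closed_operator :: "('a::complex_inner \<times> 'a) set \<Rightarrow> bool" where
  "closed_operator G \<longleftrightarrow> is_operator G \<and> closed G"

definition op_adjoint :: "('a::complex_inner \<times> 'a) set \<Rightarrow> ('a \<times> 'a) set" where
  "op_adjoint G = {(y, z). \<forall>(x, w)\<in>G. cinner y w = cinner z x}"

definition op_restrict :: "('a \<times> 'a) set \<Rightarrow> 'a set \<Rightarrow> ('a \<times> 'a) set" where
  "op_restrict G D = {(x, y) \<in> G. x \<in> D}"

definition op_plus :: "('a \<times> 'a) set \<Rightarrow> ('a \<times> 'a) set \<Rightarrow> ('a::complex_vector \<times> 'a) set" where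
  "op_plus S T = {(x, op_apply S x + op_apply T x) | x. x \<in> op_dom S \<and> x \<in> op_dom T}"

definition op_scale :: "complex \<Rightarrow> ('a::complex_vector \<times> 'a) set \<Rightarrow> ('a \<times> 'a) set" where
  "op_scale c T = {(x, c *\<^sub>C y) | x y. (x, y) \<in> T}"

definition dissipative :: "('a::complex_inner \<times> 'a) set \<Rightarrow> bool" where
  "dissipative B \<longleftrightarrow> densely_defined B \<and>
     (\<forall>\<psi>\<in>op_dom B. 0 \<le> Im (cinner \<psi> (op_apply B \<psi>)))"

definition symmetric_op :: "('a::complex_inner \<times> 'a) set \<Rightarrow> bool" where
  "symmetric_op S \<longleftrightarrow> densely_defined S \<and> S \<subseteq> op_adjoint S"

definition nonneg_op :: "('a::complex_inner \<times> 'a) set \<Rightarrow> bool" where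
  "nonneg_op V \<longleftrightarrow> (\<forall>x\<in>op_dom V. Im (cinner x (op_apply V x)) = 0 \<and> 0 \<le> Re (cinner x (op_apply V x)))"

definition dual_pair :: "('a::complex_inner \<times> 'a) set \<Rightarrow> ('a \<times> 'a) set \<Rightarrow> bool" where
  "dual_pair A At \<longleftrightarrow> densely_defined A \<and> densely_defined At \<and> closable A \<and> closable At
     \<and> A \<subseteq> op_adjoint At"

definition common_core :: "('a::complex_inner \<times> 'a) set \<Rightarrow> ('a \<times> 'a) set \<Rightarrow> 'a set \<Rightarrow> bool" where
  "common_core A At D \<longleftrightarrow> csubspace D \<and> D \<subseteq> op_dom A \<inter> op_dom At
     \<and> closure (op_restrict A D) = A \<and> closure (op_restrict At D) = At"

definition common_core_property :: "('a::complex_inner \<times> 'a) set \<Rightarrow> ('a \<times> 'a) set \<Rightarrow> bool" where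
  "common_core_property A At \<longleftrightarrow> closed_operator A \<and> closed_operator At \<and> (\<exists>D. common_core A At D)"

end

theory Submission
  imports Defs
begin


lemma cinner_add_right: "cinner x (y + z) = cinner x y + cinner (x::'a::complex_inner) z"
  by (metis cinner_add_left cinner_commute complex_cnj_add)

lemma cinner_scaleC_right: "cinner x (a *\<^sub>C y) = a * cinner (x::'a::complex_inner) y"
  by (metis cinner_commute cinner_scaleC_left complex_cnj_cnj complex_cnj_mult)

lemma cinner_diff_left: "cinner (x - y) z = cinner x z - cinner (y::'a::complex_inner) z"
  by (metis add_diff_cancel_right' cinner_add_left diff_add_cancel)

lemma cinner_diff_right: "cinner x (y - z) = cinner x y - cinner (x::'a::complex_inner) z"
  by (metis add_diff_cancel_right' cinner_add_right diff_add_cancel)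

lemma cinner_zero_left[simp]: "cinner 0 (y::'a::complex_inner) = 0"
  by (metis cinner_diff_left diff_self)

lemma cinner_zero_right[simp]: "cinner (y::'a::complex_inner) 0 = 0"
  by (metis cinner_diff_right diff_self)

lemma cinner_self: "cinner x x = complex_of_real ((norm (x::'a::complex_inner))^2)"
  by (metis cinner_nonneg cinner_real complex_eq_iff norm_eq_sqrt_cinner real_sqrt_pow2 Im_complex_of_real Re_complex_of_real)

lemma cmod: "module ((*\<^sub>C) :: complex \<Rightarrow> 'a::complex_vector \<Rightarrow> 'a)"
  by unfold_locales (auto simp: scaleC_add_right scaleC_add_left scaleC_scaleC scaleC_one)

lemma scaleC_diff_right: "a *\<^sub>C (x - y) = a *\<^sub>C x - a *\<^sub>C (y::'a::complex_vector)"
  by (metis add_diff_cancel_right' diff_add_cancel scaleC_add_right)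

lemma scaleC_diff_left: "(a - b) *\<^sub>C x = a *\<^sub>C x - b *\<^sub>C (x::'a::complex_vector)"
  by (metis add_diff_cancel_right' diff_add_cancel scaleC_add_left)

lemma scaleC_zero_right[simp]: "a *\<^sub>C (0::'a::complex_vector) = 0"
  by (metis diff_self scaleC_diff_right)

lemma scaleC_zero_left[simp]: "0 *\<^sub>C (x::'a::complex_vector) = 0"
  by (metis diff_self scaleC_diff_left)

lemma norm_scaleC: "norm (a *\<^sub>C x) = cmod a * norm (x::'a::complex_inner)"
proof -
  have "complex_of_real ((norm (a *\<^sub>C x))^2) = cinner (a *\<^sub>C x) (a *\<^sub>C x)"
    by (simp add: cinner_self)
  also have "\<dots> = (cnj a * a) * cinner x x"
    by (simp add: cinner_scaleC_left cinner_scaleC_right mult.assoc)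
  also have "\<dots> = complex_of_real ((cmod a * norm x)^2)"
    by (simp only: cinner_self complex_norm_square[of a] mult.commute[of "cnj a" a] power_mult_distrib of_real_mult)
  finally have "complex_of_real ((norm (a *\<^sub>C x))^2) = complex_of_real ((cmod a * norm x)^2)" .
  then have "(norm (a *\<^sub>C x))^2 = (cmod a * norm x)^2" by (rule of_real_eq_iff[THEN iffD1])
  then show ?thesis by (simp add: power2_eq_iff_nonneg)
qed

lemma bl_scaleC: "bounded_linear (\<lambda>x::'a::complex_inner. a *\<^sub>C x)"
proof
  show "a *\<^sub>C (x + y) = a *\<^sub>C x + a *\<^sub>C y" for x y :: 'a by (rule scaleC_add_right)
  show "a *\<^sub>C (r *\<^sub>R x) = r *\<^sub>R (a *\<^sub>C x)" for r and x :: 'a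
    by (metis scaleC_of_real scaleC_scaleC mult.commute)
  show "\<exists>K. \<forall>x::'a. norm (a *\<^sub>C x) \<le> norm x * K"
    by (rule exI[of _ "cmod a"]) (simp add: norm_scaleC)
qed

lemma polar: "cinner x y = Complex ((norm (x+y)^2 - norm (x-y)^2)/4)
   ((norm (x - \<i> *\<^sub>C y)^2 - norm (x + \<i> *\<^sub>C y)^2)/4)" for x y :: "'a::complex_inner"
proof -
  have c: "cinner y x = cnj (cinner x y)" by (rule cinner_commute)
  have n: "\<And>z::'a. (norm z)^2 = Re (cinner z z)" by (simp add: cinner_self)
  show ?thesis
    unfolding n
    by (simp add: cinner_add_left cinner_add_right cinner_diff_left cinner_diff_right
        cinner_scaleC_left cinner_scaleC_right c complex_eq_iff cinner_real)
qed

lemma continuous_on_cinner: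
  fixes f g :: "'b::topological_space \<Rightarrow> 'a::complex_inner"
  assumes "continuous_on S f" "continuous_on S g"
  shows "continuous_on S (\<lambda>x. cinner (f x) (g x))"
proof -
  have sc: "continuous_on S (\<lambda>x. \<i> *\<^sub>C g x)"
    using bounded_linear.continuous_on[OF bl_scaleC assms(2)] .
  show ?thesis
    unfolding polar
    by (intro continuous_intros assms sc) auto
qed



definition gr :: "'a set \<Rightarrow> ('a \<Rightarrow> 'a) \<Rightarrow> ('a \<times> 'a) set" where
  "gr D f = {(x, f x) | x. x \<in> D}"

lemma gr_mem[simp]: "(x, y) \<in> gr D f \<longleftrightarrow> x \<in> D \<and> y = f x"
  by (auto simp: gr_def)

lemma gr_dom[simp]: "op_dom (gr D f) = D"
  by (force simp: op_dom_def gr_def)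

lemma gr_apply[simp]: "x \<in> D \<Longrightarrow> op_apply (gr D f) x = f x"
  unfolding op_apply_def by (rule the_equality) auto

lemma gr_cong: "(\<And>x. x \<in> D \<Longrightarrow> f x = g x) \<Longrightarrow> gr D f = gr D g"
  by (auto simp: gr_def)

lemma neg_scaleC: "(-1) *\<^sub>C x = - (x::'a::complex_vector)"
  using scaleC_of_real[of "-1" x] by simp

lemma op_fun:
  assumes "is_operator G" "(x, y) \<in> G"
  shows "op_apply G x = y"
proof -
  have u: "y' = y" if "(x, y') \<in> G" for y'
  proof -
    have "((-1) *\<^sub>C x, (-1) *\<^sub>C y) \<in> G" using assms unfolding is_operator_def by blast
    then have "(x + (-1) *\<^sub>C x, y' + (-1) *\<^sub>C y) \<in> G" using assms that unfolding is_operator_def by blast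
    then have "(0, y' - y) \<in> G" by (simp add: neg_scaleC)
    then show ?thesis using assms unfolding is_operator_def by auto
  qed
  show ?thesis unfolding op_apply_def using assms(2) u by blast
qed

lemma op_in:
  assumes "is_operator G" "x \<in> op_dom G"
  shows "(x, op_apply G x) \<in> G"
  using assms op_fun unfolding op_dom_def by force

lemma in_dom: "(x, y) \<in> G \<Longrightarrow> x \<in> op_dom G"
  unfolding op_dom_def by (metis fst_conv image_eqI)

lemma op_gr: "is_operator (G::('a::complex_vector \<times> 'a) set) \<Longrightarrow> G = gr (op_dom G) (op_apply G)"
proof (rule set_eqI)
  fix p :: "'a \<times> 'a" assume a: "is_operator G"
  obtain x y where p: "p = (x, y)" by (cases p)
  show "p \<in> G \<longleftrightarrow> p \<in> gr (op_dom G) (op_apply G)"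
    unfolding p gr_mem using op_fun[OF a, of x y] op_in[OF a, of x] in_dom[of x y G] by auto
qed

lemma op_add: "is_operator G \<Longrightarrow> x \<in> op_dom G \<Longrightarrow> u \<in> op_dom G \<Longrightarrow>
   x + u \<in> op_dom G \<and> op_apply G (x + u) = op_apply G x + op_apply G u"
proof -
  assume a: "is_operator G" "x \<in> op_dom G" "u \<in> op_dom G"
  have "(x, op_apply G x) \<in> G" "(u, op_apply G u) \<in> G" using op_in a by blast+
  then have h: "(x + u, op_apply G x + op_apply G u) \<in> G"
    using a(1) unfolding is_operator_def by blast
  show ?thesis using op_fun[OF a(1) h] in_dom[OF h] by simp
qed

lemma op_scl: "is_operator G \<Longrightarrow> x \<in> op_dom G \<Longrightarrow>
   c *\<^sub>C x \<in> op_dom G \<and> op_apply G (c *\<^sub>C x) = c *\<^sub>C op_apply G x"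
proof -
  assume a: "is_operator G" "x \<in> op_dom G"
  have "(x, op_apply G x) \<in> G" using op_in a by blast
  then have h: "(c *\<^sub>C x, c *\<^sub>C op_apply G x) \<in> G"
    using a(1) unfolding is_operator_def by blast
  show ?thesis using op_fun[OF a(1) h] in_dom[OF h] by simp
qed

lemma dom_csub: "is_operator G \<Longrightarrow> csubspace (op_dom G)"
proof -
  assume a: "is_operator G"
  have "(0, 0) \<in> G" using a unfolding is_operator_def by blast
  then have "0 \<in> op_dom G" by (rule in_dom)
  then show ?thesis unfolding csubspace_def using op_add[OF a] op_scl[OF a] by simp
qed

lemma gr_op:
  assumes "csubspace D" "\<And>x u. x \<in> D \<Longrightarrow> u \<in> D \<Longrightarrow> f (x + u) = f x + f u"
    "\<And>c x. x \<in> D \<Longrightarrow> f (c *\<^sub>C x) = c *\<^sub>C f x"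
  shows "is_operator (gr D f)"
proof -
  have 0: "0 \<in> D" using assms(1) by (simp add: csubspace_def)
  have f0: "f 0 = 0" using assms(3)[OF 0, of 0] by simp
  show ?thesis unfolding is_operator_def using assms 0 f0 by (simp add: csubspace_def)
qed

lemma op_scale_gr: "op_scale c (gr D f) = gr D (\<lambda>x. c *\<^sub>C f x)"
  by (auto simp: op_scale_def gr_def)

lemma op_plus_gr: "op_plus (gr D f) (gr D g) = gr D (\<lambda>x. f x + g x)"
proof (rule set_eqI)
  fix p :: "'a \<times> 'a"
  obtain a b where p: "p = (a, b)" by (cases p)
  show "p \<in> op_plus (gr D f) (gr D g) \<longleftrightarrow> p \<in> gr D (\<lambda>x. f x + g x)"
    unfolding p op_plus_def gr_dom gr_mem by auto
qed

lemma op_restrict_gr: "is_operator A \<Longrightarrow> D \<subseteq> op_dom A \<Longrightarrow> op_restrict A D = gr D (op_apply A)"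
proof (rule set_eqI)
  fix p :: "'a \<times> 'a"
  assume a: "is_operator A" "D \<subseteq> op_dom A"
  obtain x y where p: "p = (x, y)" by (cases p)
  show "p \<in> op_restrict A D \<longleftrightarrow> p \<in> gr D (op_apply A)"
    unfolding p op_restrict_def gr_mem using op_fun[OF a(1), of x y] op_in[OF a(1), of x] a(2) by auto
qed

lemma adj_swap: "G \<subseteq> op_adjoint H \<Longrightarrow> H \<subseteq> op_adjoint G"
proof
  fix p assume a: "G \<subseteq> op_adjoint H" "p \<in> H"
  obtain x w where p: "p = (x, w)" by (cases p)
  have "cinner x z = cinner w y" if "(y, z) \<in> G" for y z
  proof -
    have "(y, z) \<in> op_adjoint H" using a that by blast
    then have "cinner y w = cinner z x" using a(2) p unfolding op_adjoint_def by blast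
    then show ?thesis by (metis cinner_commute)
  qed
  then show "p \<in> op_adjoint G" unfolding p op_adjoint_def by blast
qed



lemma closure_adj:
  fixes G H :: "('a::complex_inner \<times> 'a) set"
  assumes "G \<subseteq> op_adjoint H"
  shows "closure G \<subseteq> op_adjoint (closure H)"
proof -
  let ?P = "{pq :: ('a \<times> 'a) \<times> ('a \<times> 'a). cinner (fst (fst pq)) (snd (snd pq)) = cinner (snd (fst pq)) (fst (snd pq))}"
  have c1: "continuous_on UNIV (\<lambda>pq::('a \<times> 'a) \<times> ('a \<times> 'a). fst (fst pq))"
    by (intro continuous_on_fst continuous_on_id)
  have c2: "continuous_on UNIV (\<lambda>pq::('a \<times> 'a) \<times> ('a \<times> 'a). snd (snd pq))"
    by (intro continuous_on_snd continuous_on_id)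
  have c3: "continuous_on UNIV (\<lambda>pq::('a \<times> 'a) \<times> ('a \<times> 'a). snd (fst pq))"
    by (intro continuous_on_snd continuous_on_fst continuous_on_id)
  have c4: "continuous_on UNIV (\<lambda>pq::('a \<times> 'a) \<times> ('a \<times> 'a). fst (snd pq))"
    by (intro continuous_on_snd continuous_on_fst continuous_on_id)
  have cl: "closed ?P"
    by (rule closed_Collect_eq; rule continuous_on_cinner) (fact c1 c2 c3 c4)+
  have "G \<times> H \<subseteq> ?P"
  proof
    fix pq assume "pq \<in> G \<times> H"
    then obtain y z x w where pq: "pq = ((y, z), (x, w))" "(y, z) \<in> G" "(x, w) \<in> H"
      by (metis mem_Times_iff prod.collapse)
    then have "(y, z) \<in> op_adjoint H" using assms by blast
    then have "cinner y w = cinner z x" using pq(3) unfolding op_adjoint_def by fastforce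
    then show "pq \<in> ?P" using pq by simp
  qed
  then have "closure (G \<times> H) \<subseteq> ?P" using cl by (rule closure_minimal)
  then have "closure G \<times> closure H \<subseteq> ?P" by (simp add: closure_Times)
  then show ?thesis unfolding op_adjoint_def by auto
qed

lemma dense_zero:
  fixes y :: "'a::complex_inner"
  assumes "closure E = UNIV" "\<And>x. x \<in> E \<Longrightarrow> cinner y x = 0"
  shows "y = 0"
proof -
  have cl: "closed {x. cinner y x = 0}"
    by (intro closed_Collect_eq continuous_on_cinner continuous_intros)
  have "E \<subseteq> {x. cinner y x = 0}" using assms(2) by auto
  then have "closure E \<subseteq> {x. cinner y x = 0}" using cl by (rule closure_minimal)
  then have "cinner y y = 0" using assms(1) by auto
  then show ?thesis by (simp add: cinner_eq_zero_iff)
qed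

lemma closure_is_op:
  fixes G K :: "('a::complex_inner \<times> 'a) set"
  assumes op: "is_operator G" and adj: "closure G \<subseteq> op_adjoint K" and dn: "closure (op_dom K) = UNIV"
  shows "is_operator (closure G)"
proof -
  have z: "(0, 0) \<in> closure G" using op closure_subset unfolding is_operator_def by blast
  let ?f = "\<lambda>pq :: ('a \<times> 'a) \<times> ('a \<times> 'a). (fst (fst pq) + fst (snd pq), snd (fst pq) + snd (snd pq))"
  have "?f ` (G \<times> G) \<subseteq> G" using op unfolding is_operator_def by auto
  then have "?f ` (G \<times> G) \<subseteq> closure G" using closure_subset by blast
  then have "?f ` closure (G \<times> G) \<subseteq> closure G"
    by (intro image_closure_subset continuous_intros) auto
  note img = this
  have add: "\<forall>x y u v. (x, y) \<in> closure G \<longrightarrow> (u, v) \<in> closure G \<longrightarrow> (x + u, y + v) \<in> closure G"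
  proof (intro allI impI)
    fix x y u v assume "(x, y) \<in> closure G" "(u, v) \<in> closure G"
    with img show "(x + u, y + v) \<in> closure G"
      unfolding closure_Times using image_eqI[of "(x + u, y + v)" ?f "((x,y),(u,v))"] by force
  qed
  have sc: "(c *\<^sub>C x, c *\<^sub>C y) \<in> closure G" if "(x, y) \<in> closure G" for c x y
  proof -
    let ?g = "\<lambda>p :: 'a \<times> 'a. (c *\<^sub>C fst p, c *\<^sub>C snd p)"
    have "?g ` G \<subseteq> G" using op unfolding is_operator_def by auto
    then have "?g ` G \<subseteq> closure G" using closure_subset by blast
    then have "?g ` closure G \<subseteq> closure G"
      by (intro image_closure_subset continuous_on_Pair
          bounded_linear.continuous_on[OF bl_scaleC] continuous_intros) auto
    then show ?thesis using that by auto
  qed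
  have sv: "y = 0" if "(0, y) \<in> closure G" for y
  proof (rule dense_zero[OF dn])
    fix x assume "x \<in> op_dom K"
    then obtain w where xw: "(x, w) \<in> K" by (auto simp: op_dom_def)
    have "(0, y) \<in> op_adjoint K" using adj that by blast
    then have "cinner 0 w = cinner y x" using xw unfolding op_adjoint_def by blast
    then show "cinner y x = 0" by simp
  qed
  show ?thesis unfolding is_operator_def using z add sc sv by blast
qed

lemma dom_closure: "op_dom G \<subseteq> op_dom (closure G)"
  unfolding op_dom_def using closure_subset by blast

lemma dense_closure: "closure (op_dom G) = UNIV \<Longrightarrow> closure (op_dom (closure G)) = UNIV"
  by (metis closure_mono dom_closure top.extremum_uniqueI)



lemma scaleC_neg_left: "(- c) *\<^sub>C x = - (c *\<^sub>C (x::'a::complex_vector))"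
  using scaleC_diff_left[of 0 c x] by simp

lemma half_twice: "(1/2::complex) *\<^sub>C (a + a) = (a::'a::complex_vector)"
proof -
  have "(1/2::complex) *\<^sub>C (a + a) = (1/2 + 1/2::complex) *\<^sub>C a"
    unfolding scaleC_add_right scaleC_add_left ..
  also have "(1/2 + 1/2::complex) = 1" by simp
  finally show ?thesis by (simp add: scaleC_one)
qed

lemma alg1: "(1/2::complex) *\<^sub>C (a + b) + \<i> *\<^sub>C ((- \<i>/2) *\<^sub>C (a - b)) = (a::'a::complex_vector)"
proof -
  have "\<i> *\<^sub>C ((- \<i>/2) *\<^sub>C (a - b)) = (1/2::complex) *\<^sub>C (a - b)"
    by (simp add: scaleC_scaleC)
  then have "(1/2::complex) *\<^sub>C (a + b) + \<i> *\<^sub>C ((- \<i>/2) *\<^sub>C (a - b)) = (1/2::complex) *\<^sub>C ((a + b) + (a - b))"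
    by (simp only: scaleC_add_right)
  also have "(a + b) + (a - b) = a + a" by simp
  finally show ?thesis by (simp add: half_twice)
qed

lemma alg2: "(1/2::complex) *\<^sub>C (a + b) + (- \<i>) *\<^sub>C ((- \<i>/2) *\<^sub>C (a - b)) = (b::'a::complex_vector)"
proof -
  have "(- \<i>) *\<^sub>C ((- \<i>/2) *\<^sub>C (a - b)) = (- (1/2::complex)) *\<^sub>C (a - b)"
    by (simp add: scaleC_scaleC)
  also have "\<dots> = - ((1/2::complex) *\<^sub>C (a - b))" by (rule scaleC_neg_left)
  finally have eq: "(- \<i>) *\<^sub>C ((- \<i>/2) *\<^sub>C (a - b)) = - ((1/2::complex) *\<^sub>C (a - b))" .
  have "(1/2::complex) *\<^sub>C (a + b) + (- \<i>) *\<^sub>C ((- \<i>/2) *\<^sub>C (a - b)) = (1/2::complex) *\<^sub>C ((a + b) - (a - b))"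
    unfolding eq scaleC_diff_right[of "1/2" "a+b" "a-b"] by simp
  also have "(a + b) - (a - b) = b + b" by simp
  finally show ?thesis by (simp add: half_twice)
qed

lemma scaleC_comm: "a *\<^sub>C (c *\<^sub>C x) = c *\<^sub>C (a *\<^sub>C (x::'a::complex_vector))"
  by (simp add: scaleC_scaleC mult.commute)

lemma lin_comb_op:
  fixes S V :: "('a::complex_vector \<times> 'a) set"
  assumes "is_operator S" "is_operator V" "op_dom S = D" "op_dom V = D"
  shows "is_operator (gr D (\<lambda>x. op_apply S x + c *\<^sub>C op_apply V x))"
proof (rule gr_op)
  show "csubspace D" using dom_csub[OF assms(1)] assms(3) by simp
  fix x u assume "x \<in> D" "u \<in> D"
  then show "op_apply S (x + u) + c *\<^sub>C op_apply V (x + u) =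
        op_apply S x + c *\<^sub>C op_apply V x + (op_apply S u + c *\<^sub>C op_apply V u)"
    using op_add[OF assms(1), of x u] op_add[OF assms(2), of x u] assms(3,4)
    by (simp add: scaleC_add_right algebra_simps)
next
  fix a x assume "x \<in> D"
  then show "op_apply S (a *\<^sub>C x) + c *\<^sub>C op_apply V (a *\<^sub>C x) =
        a *\<^sub>C (op_apply S x + c *\<^sub>C op_apply V x)"
    using op_scl[OF assms(1), of x a] op_scl[OF assms(2), of x a] assms(3,4)
    by (simp add: scaleC_add_right scaleC_comm)
qed



lemma partB:
  fixes S V :: "('a::complex_inner \<times> 'a) set"
  assumes sS: "symmetric_op S" and sV: "symmetric_op V" and dSV: "op_dom S = op_dom V"
    and dis: "dissipative (op_plus S (op_scale \<i> V))"
  shows "dual_pair (closure (op_plus S (op_scale \<i> V))) (closure (op_plus S (op_scale (- \<i>) V)))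
            \<and> common_core_property (closure (op_plus S (op_scale \<i> V)))
                                   (closure (op_plus S (op_scale (- \<i>) V)))"
proof -
  define D where "D = op_dom S"
  have opS: "is_operator S" and opV: "is_operator V"
    using sS sV by (auto simp: symmetric_op_def densely_defined_def)
  have dS: "op_dom S = D" and dV: "op_dom V = D" using dSV by (auto simp: D_def)
  have Sg: "S = gr D (op_apply S)" using op_gr[OF opS] dS by simp
  have Vg: "V = gr D (op_apply V)" using op_gr[OF opV] dV by simp
  have gen: "op_plus S (op_scale c V) = gr D (\<lambda>x. op_apply S x + c *\<^sub>C op_apply V x)" for c
    by (subst Sg, subst Vg) (simp add: op_scale_gr op_plus_gr)
  define A0 where "A0 = op_plus S (op_scale \<i> V)"
  define B0 where "B0 = op_plus S (op_scale (- \<i>) V)"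
  have A0g: "A0 = gr D (\<lambda>x. op_apply S x + \<i> *\<^sub>C op_apply V x)" using gen A0_def by simp
  have B0g: "B0 = gr D (\<lambda>x. op_apply S x + (- \<i>) *\<^sub>C op_apply V x)" using gen B0_def by simp
  have opA0: "is_operator A0" unfolding A0g by (rule lin_comb_op[OF opS opV dS dV])
  have opB0: "is_operator B0" unfolding B0g by (rule lin_comb_op[OF opS opV dS dV])
  have csD: "csubspace D" using dom_csub[OF opS] dS by simp
  have symS: "cinner y (op_apply S x) = cinner (op_apply S y) x" if "x \<in> D" "y \<in> D" for x y
  proof -
    have "(y, op_apply S y) \<in> op_adjoint S" using sS op_in[OF opS, of y] that dS
      by (auto simp: symmetric_op_def)
    then show ?thesis using op_in[OF opS, of x] that dS unfolding op_adjoint_def by fastforce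
  qed
  have symV: "cinner y (op_apply V x) = cinner (op_apply V y) x" if "x \<in> D" "y \<in> D" for x y
  proof -
    have "(y, op_apply V y) \<in> op_adjoint V" using sV op_in[OF opV, of y] that dV
      by (auto simp: symmetric_op_def)
    then show ?thesis using op_in[OF opV, of x] that dV unfolding op_adjoint_def by fastforce
  qed
  have adjAB: "A0 \<subseteq> op_adjoint B0"
  proof
    fix p assume "p \<in> A0"
    then obtain y where p: "p = (y, op_apply S y + \<i> *\<^sub>C op_apply V y)" "y \<in> D"
      unfolding A0g gr_def by blast
    have "cinner y (op_apply S x + (- \<i>) *\<^sub>C op_apply V x) =
          cinner (op_apply S y + \<i> *\<^sub>C op_apply V y) x" if "x \<in> D" for x
      using symS[OF that p(2)] symV[OF that p(2)]
      by (simp add: cinner_add_left cinner_add_right cinner_scaleC_left cinner_scaleC_right)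
    then show "p \<in> op_adjoint B0" unfolding p B0g op_adjoint_def gr_def by auto
  qed
  have adjBA: "B0 \<subseteq> op_adjoint A0" by (rule adj_swap[OF adjAB])
  have dA0: "op_dom A0 = D" and dB0: "op_dom B0 = D" unfolding A0g B0g by simp_all
  have dense: "closure D = UNIV"
    using dis dA0 unfolding A0_def dissipative_def densely_defined_def by simp
  have cAB: "closure A0 \<subseteq> op_adjoint (closure B0)" by (rule closure_adj[OF adjAB])
  have cBA: "closure B0 \<subseteq> op_adjoint (closure A0)" by (rule closure_adj[OF adjBA])
  have dcA: "closure (op_dom (closure A0)) = UNIV" by (rule dense_closure) (simp add: dA0 dense)
  have dcB: "closure (op_dom (closure B0)) = UNIV" by (rule dense_closure) (simp add: dB0 dense)
  have opcA: "is_operator (closure A0)" by (rule closure_is_op[OF opA0 cAB dcB])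
  have opcB: "is_operator (closure B0)" by (rule closure_is_op[OF opB0 cBA dcA])
  have dp: "dual_pair (closure A0) (closure B0)"
    unfolding dual_pair_def densely_defined_def closable_def
    using opcA opcB dcA dcB cAB by simp
  have core: "closure (op_restrict (closure G) D) = closure G" if "op_dom G = D" for G :: "('a \<times> 'a) set"
  proof -
    have "G \<subseteq> op_restrict (closure G) D"
      using that closure_subset in_dom unfolding op_restrict_def by fastforce
    moreover have "op_restrict (closure G) D \<subseteq> closure G" unfolding op_restrict_def by auto
    ultimately show ?thesis
      by (metis closure_closure closure_mono subset_antisym)
  qed
  have ccp: "common_core_property (closure A0) (closure B0)"
    unfolding common_core_property_def closed_operator_def common_core_def
    using opcA opcB core[OF dA0] core[OF dB0] csD dom_closure[of A0] dom_closure[of B0] dA0 dB0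
    by (intro conjI exI[of _ D]) auto
  show ?thesis using dp ccp unfolding A0_def B0_def by simp
qed



lemma partA:
  fixes A At :: "('a::complex_inner \<times> 'a) set"
  assumes dp: "dual_pair A At" and cA: "closed_operator A" and cAt: "closed_operator At"
    and cc: "common_core A At D" and dis: "dissipative A"
  shows "\<exists>S V. symmetric_op S \<and> symmetric_op V \<and> nonneg_op V
               \<and> op_dom S = D \<and> op_dom V = D
               \<and> op_restrict A D = op_plus S (op_scale \<i> V)
               \<and> op_restrict At D = op_plus S (op_scale (- \<i>) V)"
proof -
  have opA: "is_operator A" and opAt: "is_operator At" using cA cAt by (auto simp: closed_operator_def)
  have csD: "csubspace D" and DA: "D \<subseteq> op_dom A" and DAt: "D \<subseteq> op_dom At"
    and clA: "closure (op_restrict A D) = A"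
    using cc by (auto simp: common_core_def)
  have adj1: "A \<subseteq> op_adjoint At" using dp by (simp add: dual_pair_def)
  have adj2: "At \<subseteq> op_adjoint A" by (rule adj_swap[OF adj1])
  let ?a = "op_apply A" and ?b = "op_apply At"
  have F1: "cinner y (?b x) = cinner (?a y) x" if "x \<in> D" "y \<in> D" for x y
  proof -
    have "(y, ?a y) \<in> op_adjoint At" using adj1 op_in[OF opA, of y] that DA by blast
    then show ?thesis using op_in[OF opAt, of x] that DAt unfolding op_adjoint_def by fastforce
  qed
  have F2: "cinner y (?a x) = cinner (?b y) x" if "x \<in> D" "y \<in> D" for x y
  proof -
    have "(y, ?b y) \<in> op_adjoint A" using adj2 op_in[OF opAt, of y] that DAt by blast
    then show ?thesis using op_in[OF opA, of x] that DA unfolding op_adjoint_def by fastforce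
  qed
  define fS where "fS x = (1/2::complex) *\<^sub>C (?a x + ?b x)" for x
  define fV where "fV x = (- \<i>/2) *\<^sub>C (?a x - ?b x)" for x
  define S where "S = gr D fS"
  define V where "V = gr D fV"
  have addA: "?a (x + u) = ?a x + ?a u" if "x \<in> D" "u \<in> D" for x u
    using op_add[OF opA, of x u] that DA by auto
  have addAt: "?b (x + u) = ?b x + ?b u" if "x \<in> D" "u \<in> D" for x u
    using op_add[OF opAt, of x u] that DAt by auto
  have sclA: "?a (c *\<^sub>C x) = c *\<^sub>C ?a x" if "x \<in> D" for c x
    using op_scl[OF opA, of x c] that DA by auto
  have sclAt: "?b (c *\<^sub>C x) = c *\<^sub>C ?b x" if "x \<in> D" for c x
    using op_scl[OF opAt, of x c] that DAt by auto
  have opS: "is_operator S" unfolding S_def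
  proof (rule gr_op[OF csD])
    fix x u assume "x \<in> D" "u \<in> D"
    then show "fS (x + u) = fS x + fS u" unfolding fS_def
      by (simp add: addA addAt scaleC_add_right[symmetric] algebra_simps)
  next
    fix c x assume "x \<in> D"
    then show "fS (c *\<^sub>C x) = c *\<^sub>C fS x" unfolding fS_def
      by (simp add: sclA sclAt scaleC_add_right[symmetric] scaleC_comm)
  qed
  have opV: "is_operator V" unfolding V_def
  proof (rule gr_op[OF csD])
    fix x u assume "x \<in> D" "u \<in> D"
    then show "fV (x + u) = fV x + fV u" unfolding fV_def
      by (simp add: addA addAt scaleC_add_right[symmetric] algebra_simps)
  next
    fix c x assume "x \<in> D"
    then show "fV (c *\<^sub>C x) = c *\<^sub>C fV x" unfolding fV_def
      by (simp add: sclA sclAt scaleC_diff_right[symmetric] scaleC_comm)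
  qed
  have dense: "closure D = UNIV"
  proof -
    have "op_dom A = fst ` closure (op_restrict A D)" using clA by (simp add: op_dom_def)
    also have "\<dots> \<subseteq> closure (fst ` op_restrict A D)"
      by (rule continuous_image_closure_subset[of UNIV]) (auto intro: continuous_on_fst continuous_on_id)
    also have "\<dots> \<subseteq> closure D" by (rule closure_mono) (auto simp: op_restrict_def)
    finally have "closure (op_dom A) \<subseteq> closure D" by (metis closure_closure closure_mono)
    moreover have "closure (op_dom A) = UNIV" using dp by (simp add: dual_pair_def densely_defined_def)
    ultimately show ?thesis by auto
  qed
  have symS: "symmetric_op S"
    unfolding symmetric_op_def densely_defined_def
  proof (intro conjI)
    show "is_operator S" by (rule opS)
    show "closure (op_dom S) = UNIV" using dense by (simp add: S_def)
    show "S \<subseteq> op_adjoint S"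
    proof
      fix p assume "p \<in> S"
      then obtain y where p: "p = (y, fS y)" "y \<in> D" unfolding S_def gr_def by blast
      have "cinner y (fS x) = cinner (fS y) x" if "x \<in> D" for x
        unfolding fS_def using F1[OF that p(2)] F2[OF that p(2)]
        by (simp add: cinner_add_left cinner_add_right cinner_scaleC_left cinner_scaleC_right add.commute)
      then show "p \<in> op_adjoint S" unfolding p S_def op_adjoint_def gr_def by auto
    qed
  qed
  have symV: "symmetric_op V"
    unfolding symmetric_op_def densely_defined_def
  proof (intro conjI)
    show "is_operator V" by (rule opV)
    show "closure (op_dom V) = UNIV" using dense by (simp add: V_def)
    show "V \<subseteq> op_adjoint V"
    proof
      fix p assume "p \<in> V"
      then obtain y where p: "p = (y, fV y)" "y \<in> D" unfolding V_def gr_def by blast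
      have "cinner y (fV x) = cinner (fV y) x" if "x \<in> D" for x
        unfolding fV_def using F1[OF that p(2)] F2[OF that p(2)]
        by (simp add: cinner_diff_left cinner_diff_right cinner_scaleC_left cinner_scaleC_right algebra_simps)
      then show "p \<in> op_adjoint V" unfolding p V_def op_adjoint_def gr_def by auto
    qed
  qed
  have nn: "nonneg_op V" unfolding nonneg_op_def
  proof
    fix x assume "x \<in> op_dom V"
    then have x: "x \<in> D" by (simp add: V_def)
    define z where "z = cinner x (?a x)"
    have "cinner x (?b x) = cnj z" using F1[OF x x] unfolding z_def by (metis cinner_commute)
    then have "cinner x (op_apply V x) = (- \<i>/2) * (z - cnj z)"
      using x unfolding V_def fV_def z_def by (simp add: cinner_scaleC_right cinner_diff_right)
    also have "\<dots> = complex_of_real (Im z)" by (simp add: complex_eq_iff)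
    finally have e: "cinner x (op_apply V x) = complex_of_real (Im z)" .
    have "0 \<le> Im z" using dis x DA unfolding dissipative_def z_def by auto
    then show "Im (cinner x (op_apply V x)) = 0 \<and> 0 \<le> Re (cinner x (op_apply V x))"
      unfolding e by simp
  qed
  have r1: "op_restrict A D = op_plus S (op_scale \<i> V)"
    unfolding op_restrict_gr[OF opA DA] S_def V_def op_scale_gr op_plus_gr
    by (rule gr_cong) (unfold fS_def fV_def, rule alg1[symmetric])
  have r2: "op_restrict At D = op_plus S (op_scale (- \<i>) V)"
    unfolding op_restrict_gr[OF opAt DAt] S_def V_def op_scale_gr op_plus_gr
    by (rule gr_cong) (unfold fS_def fV_def, rule alg2[symmetric])
  show ?thesis
    using symS symV nn r1 r2 by (intro exI[of _ S] exI[of _ V]) (simp add: S_def V_def)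
qed


theorem lemma3p3:
  fixes dummy :: "'a::chilbert_space"
  shows "(\<forall>(A :: ('a \<times> 'a) set) At D.
            dual_pair A At \<and> closed_operator A \<and> closed_operator At \<and> common_core A At D
            \<and> dissipative A \<longrightarrow>
            (\<exists>S V. symmetric_op S \<and> symmetric_op V \<and> nonneg_op V
               \<and> op_dom S = D \<and> op_dom V = D
               \<and> op_restrict A D = op_plus S (op_scale \<i> V)
               \<and> op_restrict At D = op_plus S (op_scale (- \<i>) V)))
       \<and> (\<forall>(S :: ('a \<times> 'a) set) V.
            symmetric_op S \<and> symmetric_op V \<and> nonneg_op V \<and> op_dom S = op_dom V
            \<and> dissipative (op_plus S (op_scale \<i> V)) \<longrightarrow>
            dual_pair (closure (op_plus S (op_scale \<i> V))) (closure (op_plus S (op_scale (- \<i>) V)))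
            \<and> common_core_property (closure (op_plus S (op_scale \<i> V)))
                                   (closure (op_plus S (op_scale (- \<i>) V))))"
  using partA partB by blast

end
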